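(* For any two subsets $I,J\subseteq\{1,\dots,n\}$, $F_I=F_J$ if and only if $\overline I^0=\overline J^0$ (equivalently $\Pi_{\overline I^0}=\Pi_{\overline J^0}$).
   Context: Let $\mathfrak g$ be a finite-dimensional complex simple Lie algebra with root system $\Phi$, base $\Pi=\{\alpha_1,\dots,\alpha_n\}$, Weyl group $W$; $E$ is the real span of $\Pi$ with $W$-invariant inner product $(\cdot,\cdot)$. Fix a dominant integral weight $\lambda=\sum_i m_i\alpha_i$. For $x\in E$, $c_i(x)$ is the coefficient of $\alpha_i$ in $x$. Weight polytope $\mathbf P=\mathrm{conv}(W\lambda)$, and $F_I=\{x\in\mathbf P\mid c_i(x)=m_i\ \forall i\in I\}$ for $I\subseteq\{1,\dots,n\}$. The extended Dynkin diagram is the Dynkin diagram of $\Pi$ plus a node $\{-\lambda\}$ joined to $\alpha_i$ iff $(\lambda,\alpha_i)>0$. For $I\subseteq\{1,\dots,n\}$ with complement $\overline I$, $\overline I^0$ is the set of indices $j$ such that $\alpha_j$ lies in the connected component containing $\{-\lambda\}$ of the induced subdiagram on $\{\alpha_j\mid j\in\overline I\}\cup\{-\lambda\}$; $\Pi_{\overline I^0}=\{\alpha_j\mid j\in\overline I^0\}$. *)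

theory Defs
  imports "HOL-Analysis.Analysis"
begin

text \<open>Simple roots are indexed by 1..n, alpha :: nat => 'a, with 'a a Euclidean space E.\<close>

definition cartan_int :: "(nat \<Rightarrow> 'a::euclidean_space) \<Rightarrow> nat \<Rightarrow> nat \<Rightarrow> real" where
  "cartan_int \<alpha> i j = 2 * (\<alpha> i \<bullet> \<alpha> j) / (\<alpha> j \<bullet> \<alpha> j)"

definition dynkin_adj :: "(nat \<Rightarrow> 'a::euclidean_space) \<Rightarrow> nat \<Rightarrow> nat \<Rightarrow> bool" where
  "dynkin_adj \<alpha> i j \<longleftrightarrow> i \<noteq> j \<and> \<alpha> i \<bullet> \<alpha> j \<noteq> 0"

text \<open>Base of an irreducible (reduced, crystallographic) root system, i.e. of the root
  system of a finite-dimensional complex simple Lie algebra, spanning E.\<close>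
definition simple_system :: "(nat \<Rightarrow> 'a::euclidean_space) \<Rightarrow> nat \<Rightarrow> bool" where
  "simple_system \<alpha> n \<longleftrightarrow>
     n \<ge> 1 \<and> inj_on \<alpha> {1..n} \<and> independent (\<alpha> ` {1..n}) \<and> span (\<alpha> ` {1..n}) = UNIV \<and>
     (\<forall>i\<in>{1..n}. \<forall>j\<in>{1..n}. i \<noteq> j \<longrightarrow> \<alpha> i \<bullet> \<alpha> j \<le> 0 \<and> cartan_int \<alpha> i j \<in> \<int>) \<and>
     (\<forall>S. S \<subseteq> {1..n} \<and> S \<noteq> {} \<and> S \<noteq> {1..n} \<longrightarrow>
        (\<exists>i\<in>S. \<exists>j\<in>{1..n} - S. dynkin_adj \<alpha> i j))"

definition reflection :: "'a::euclidean_space \<Rightarrow> 'a \<Rightarrow> 'a" where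
  "reflection v x = x - (2 * (x \<bullet> v) / (v \<bullet> v)) *\<^sub>R v"

inductive_set weyl_group :: "(nat \<Rightarrow> 'a::euclidean_space) \<Rightarrow> nat \<Rightarrow> ('a \<Rightarrow> 'a) set"
  for \<alpha> n where
  id: "id \<in> weyl_group \<alpha> n"
| refl: "w \<in> weyl_group \<alpha> n \<Longrightarrow> i \<in> {1..n} \<Longrightarrow> reflection (\<alpha> i) \<circ> w \<in> weyl_group \<alpha> n"

definition dominant_integral :: "(nat \<Rightarrow> 'a::euclidean_space) \<Rightarrow> nat \<Rightarrow> 'a \<Rightarrow> bool" where
  "dominant_integral \<alpha> n lam \<longleftrightarrow> (\<forall>i\<in>{1..n}. 2 * (lam \<bullet> \<alpha> i) / (\<alpha> i \<bullet> \<alpha> i) \<in> \<nat>)"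

definition root_coeff :: "(nat \<Rightarrow> 'a::euclidean_space) \<Rightarrow> nat \<Rightarrow> nat \<Rightarrow> 'a \<Rightarrow> real" where
  "root_coeff \<alpha> n i x =
     (THE c. (\<forall>j. j \<notin> {1..n} \<longrightarrow> c j = 0) \<and> x = (\<Sum>j=1..n. c j *\<^sub>R \<alpha> j)) i"

definition weight_polytope :: "(nat \<Rightarrow> 'a::euclidean_space) \<Rightarrow> nat \<Rightarrow> 'a \<Rightarrow> 'a set" where
  "weight_polytope \<alpha> n lam = convex hull {w lam | w. w \<in> weyl_group \<alpha> n}"

definition weight_face :: "(nat \<Rightarrow> 'a::euclidean_space) \<Rightarrow> nat \<Rightarrow> 'a \<Rightarrow> nat set \<Rightarrow> 'a set" where
  "weight_face \<alpha> n lam I =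
     {x \<in> weight_polytope \<alpha> n lam. \<forall>i\<in>I. root_coeff \<alpha> n i x = root_coeff \<alpha> n i lam}"

text \<open>Indices j in S whose node alpha_j lies in the connected component of the node -lambda
  in the subgraph of the extended Dynkin diagram induced on {alpha_j | j in S} plus {-lambda}.\<close>
inductive_set lam_component :: "(nat \<Rightarrow> 'a::euclidean_space) \<Rightarrow> 'a \<Rightarrow> nat set \<Rightarrow> nat set"
  for \<alpha> lam S where
  base: "j \<in> S \<Longrightarrow> lam \<bullet> \<alpha> j > 0 \<Longrightarrow> j \<in> lam_component \<alpha> lam S"
| step: "i \<in> lam_component \<alpha> lam S \<Longrightarrow> j \<in> S \<Longrightarrow> dynkin_adj \<alpha> i j \<Longrightarrow> j \<in> lam_component \<alpha> lam S"

text \<open>The set \<open>\<overline>I\<^sup>0\<close>, with complement taken in {1..n}.\<close>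
definition compl0 :: "(nat \<Rightarrow> 'a::euclidean_space) \<Rightarrow> nat \<Rightarrow> 'a \<Rightarrow> nat set \<Rightarrow> nat set" where
  "compl0 \<alpha> n lam I = lam_component \<alpha> lam ({1..n} - I)"

end

theory Submission
  imports Defs
begin


locale ss =
  fixes \<alpha> :: "nat \<Rightarrow> 'a::euclidean_space" and n :: nat
  assumes ss: "simple_system \<alpha> n"
begin

abbreviation "A \<equiv> {1..n}"
abbreviation rc where "rc \<equiv> root_coeff \<alpha> n"

lemma ssu: "n \<ge> 1 \<and> inj_on \<alpha> {1..n} \<and> independent (\<alpha> ` {1..n}) \<and> span (\<alpha> ` {1..n}) = UNIV \<and>
     (\<forall>i\<in>{1..n}. \<forall>j\<in>{1..n}. i \<noteq> j \<longrightarrow> \<alpha> i \<bullet> \<alpha> j \<le> 0 \<and> cartan_int \<alpha> i j \<in> \<int>) \<and>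
     (\<forall>S. S \<subseteq> {1..n} \<and> S \<noteq> {} \<and> S \<noteq> {1..n} \<longrightarrow>
        (\<exists>i\<in>S. \<exists>j\<in>{1..n} - S. dynkin_adj \<alpha> i j))"
  using ss unfolding simple_system_def .
lemma inj: "inj_on \<alpha> A" using ssu by (elim conjE)
lemma indep: "independent (\<alpha> ` A)" using ssu by (elim conjE)
lemma spanU: "span (\<alpha> ` A) = UNIV" using ssu by (elim conjE)
lemma ssc: "\<forall>i\<in>{1..n}. \<forall>j\<in>{1..n}. i \<noteq> j \<longrightarrow> \<alpha> i \<bullet> \<alpha> j \<le> 0 \<and> cartan_int \<alpha> i j \<in> \<int>"
  using ssu by (elim conjE)
lemma obtuse: "i \<in> A \<Longrightarrow> j \<in> A \<Longrightarrow> i \<noteq> j \<Longrightarrow> \<alpha> i \<bullet> \<alpha> j \<le> 0"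
  using ssc by blast
lemma cartanZ: "i \<in> A \<Longrightarrow> j \<in> A \<Longrightarrow> i \<noteq> j \<Longrightarrow> cartan_int \<alpha> i j \<in> \<int>"
  using ssc by blast
lemma nz: "i \<in> A \<Longrightarrow> \<alpha> i \<noteq> 0"
proof
  assume "i \<in> A" "\<alpha> i = 0"
  hence "0 \<in> \<alpha> ` A" by (metis imageI)
  with indep dependent_zero show False by blast
qed
lemma npos: "i \<in> A \<Longrightarrow> \<alpha> i \<bullet> \<alpha> i > 0"
  using nz by simp

lemma repr_exists: "\<exists>c. x = (\<Sum>j\<in>A. c j *\<^sub>R \<alpha> j)"
proof -
  have "x \<in> span (\<alpha> ` A)" using spanU by simp
  then obtain u where u: "x = (\<Sum>v\<in>\<alpha> ` A. u v *\<^sub>R v)"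
    using span_finite[of "\<alpha> ` A"] by auto
  also have "\<dots> = (\<Sum>j\<in>A. u (\<alpha> j) *\<^sub>R \<alpha> j)"
    by (subst sum.reindex[OF inj]) simp
  finally have "x = (\<Sum>j\<in>A. (\<lambda>j. u (\<alpha> j)) j *\<^sub>R \<alpha> j)" by simp
  thus ?thesis by (intro exI[of _ "\<lambda>j. u (\<alpha> j)"])
qed

lemma repr_zero: assumes "(\<Sum>j\<in>A. c j *\<^sub>R \<alpha> j) = 0" "i \<in> A" shows "c i = 0"
proof (rule ccontr)
  assume ci: "c i \<noteq> 0"
  define u where "u v = c (the_inv_into A \<alpha> v)" for v
  have "(\<Sum>v\<in>\<alpha> ` A. u v *\<^sub>R v) = (\<Sum>j\<in>A. u (\<alpha> j) *\<^sub>R \<alpha> j)"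
    by (subst sum.reindex[OF inj]) simp
  also have "\<dots> = (\<Sum>j\<in>A. c j *\<^sub>R \<alpha> j)"
  proof (rule sum.cong)
    fix j assume "j \<in> A" thus "u (\<alpha> j) *\<^sub>R \<alpha> j = c j *\<^sub>R \<alpha> j"
      using the_inv_into_f_f[OF inj \<open>j \<in> A\<close>] by (simp add: u_def)
  qed simp
  finally have "(\<Sum>v\<in>\<alpha> ` A. u v *\<^sub>R v) = 0" using assms by simp
  moreover have "u (\<alpha> i) \<noteq> 0" using ci the_inv_into_f_f[OF inj assms(2)] by (simp add: u_def)
  ultimately have "dependent (\<alpha> ` A)"
    using dependent_finite[of "\<alpha> ` A"] assms(2) by blast
  with indep show False by simp
qed

lemma repr_unique: assumes "(\<Sum>j\<in>A. c j *\<^sub>R \<alpha> j) = (\<Sum>j\<in>A. d j *\<^sub>R \<alpha> j)" "i \<in> A"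
  shows "c i = d i"
proof -
  have "(\<Sum>j\<in>A. (c j - d j) *\<^sub>R \<alpha> j) = 0"
    using assms(1) by (simp add: scaleR_diff_left sum_subtractf)
  from repr_zero[OF this assms(2)] show ?thesis by simp
qed

lemma rc_char: "(\<forall>j. j \<notin> A \<longrightarrow> rc j x = 0) \<and> x = (\<Sum>j\<in>A. rc j x *\<^sub>R \<alpha> j)"
proof -
  let ?P = "\<lambda>c. (\<forall>j. j \<notin> A \<longrightarrow> c j = 0) \<and> x = (\<Sum>j\<in>A. c j *\<^sub>R \<alpha> j)"
  obtain c where c: "x = (\<Sum>j\<in>A. c j *\<^sub>R \<alpha> j)" using repr_exists by blast
  define c' where "c' j = (if j \<in> A then c j else 0)" for j
  have "?P c'" using c by (auto simp: c'_def)
  moreover have "d = c'" if "?P d" for d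
  proof
    fix j show "d j = c' j"
      using that \<open>?P c'\<close> repr_unique[of d c' j] by (cases "j \<in> A") auto
  qed
  ultimately have "?P (THE c. ?P c)" by (rule theI)
  thus ?thesis unfolding root_coeff_def .
qed

lemma rc_out: "j \<notin> A \<Longrightarrow> rc j x = 0" using rc_char by blast
lemma rc_repr: "x = (\<Sum>j\<in>A. rc j x *\<^sub>R \<alpha> j)" using rc_char by blast
lemma rc_eq: "x = (\<Sum>j\<in>A. c j *\<^sub>R \<alpha> j) \<Longrightarrow> i \<in> A \<Longrightarrow> rc i x = c i"
proof -
  assume H: "x = (\<Sum>j\<in>A. c j *\<^sub>R \<alpha> j)" "i \<in> A"
  have "(\<Sum>j\<in>A. rc j x *\<^sub>R \<alpha> j) = (\<Sum>j\<in>A. c j *\<^sub>R \<alpha> j)"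
    by (rule trans[OF sym[OF rc_repr] H(1)])
  from repr_unique[OF this H(2)] show ?thesis .
qed

lemma rc_linear: "linear (rc i)"
proof (cases "i \<in> A")
  case True
  show ?thesis
  proof (rule linearI)
    fix x y
    have "x + y = (\<Sum>j\<in>A. rc j x *\<^sub>R \<alpha> j) + (\<Sum>j\<in>A. rc j y *\<^sub>R \<alpha> j)"
      by (rule arg_cong2[where f="(+)", OF rc_repr rc_repr])
    also have "\<dots> = (\<Sum>j\<in>A. (rc j x + rc j y) *\<^sub>R \<alpha> j)"
      by (simp add: scaleR_add_left sum.distrib)
    finally have "x + y = (\<Sum>j\<in>A. (rc j x + rc j y) *\<^sub>R \<alpha> j)" .
    thus "rc i (x + y) = rc i x + rc i y" by (rule rc_eq[OF _ True])
  next
    fix r x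
    have "r *\<^sub>R x = r *\<^sub>R (\<Sum>j\<in>A. rc j x *\<^sub>R \<alpha> j)"
      by (rule arg_cong[OF rc_repr])
    also have "\<dots> = (\<Sum>j\<in>A. (r * rc j x) *\<^sub>R \<alpha> j)"
      by (simp add: scaleR_sum_right)
    finally have "r *\<^sub>R x = (\<Sum>j\<in>A. (r * rc j x) *\<^sub>R \<alpha> j)" .
    thus "rc i (r *\<^sub>R x) = r *\<^sub>R rc i x" using rc_eq[OF _ True] by simp
  qed
next
  case False thus ?thesis by (intro linearI) (simp_all add: rc_out)
qed

lemma rc_add: "rc i (x + y) = rc i x + rc i y" using linear_add[OF rc_linear] .
lemma rc_diff: "rc i (x - y) = rc i x - rc i y" using linear_diff[OF rc_linear] .
lemma rc_scale: "rc i (r *\<^sub>R x) = r * rc i x" using linear_cmul[OF rc_linear] by simp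
lemma rc_sum: "rc i (sum g S) = (\<Sum>a\<in>S. rc i (g a))" using linear_sum[OF rc_linear] .

lemma rc_alpha: "j \<in> A \<Longrightarrow> rc i (\<alpha> j) = (if i = j then 1 else 0)"
proof (cases "i \<in> A")
  case True
  assume j: "j \<in> A"
  have "(\<Sum>l\<in>A. (if l = j then 1 else 0) *\<^sub>R \<alpha> l) = (\<Sum>l\<in>A. if l = j then \<alpha> l else 0)"
    by (rule sum.cong) auto
  also have "\<dots> = \<alpha> j" using j by simp
  finally have "\<alpha> j = (\<Sum>l\<in>A. (if l = j then 1 else 0) *\<^sub>R \<alpha> l)" by simp
  thus ?thesis using rc_eq True by simp
next
  case False assume "j \<in> A" thus ?thesis using False rc_out by auto
qed

lemma ext_rc: "(\<And>j. j \<in> A \<Longrightarrow> rc j x = rc j y) \<Longrightarrow> x = y"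
proof -
  assume H: "\<And>j. j \<in> A \<Longrightarrow> rc j x = rc j y"
  have "(\<Sum>j\<in>A. rc j x *\<^sub>R \<alpha> j) = (\<Sum>j\<in>A. rc j y *\<^sub>R \<alpha> j)"
    by (rule sum.cong) (simp_all add: H)
  thus ?thesis using rc_repr[of x, symmetric] rc_repr[of y, symmetric] by (simp only:)
qed

lemma inner_repr: "x \<bullet> y = (\<Sum>j\<in>A. rc j x * (\<alpha> j \<bullet> y))"
proof -
  have "x \<bullet> y = (\<Sum>j\<in>A. rc j x *\<^sub>R \<alpha> j) \<bullet> y" using rc_repr[of x, symmetric] by (simp only:)
  also have "\<dots> = (\<Sum>j\<in>A. rc j x * (\<alpha> j \<bullet> y))" by (simp add: inner_sum_left)
  finally show ?thesis .
qed

end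


fun wmap :: "(nat \<Rightarrow> 'a::euclidean_space) \<Rightarrow> nat list \<Rightarrow> 'a \<Rightarrow> 'a" where
  "wmap \<alpha> [] = id"
| "wmap \<alpha> (i # ws) = reflection (\<alpha> i) \<circ> wmap \<alpha> ws"

lemma wmap_append: "wmap \<alpha> (xs @ ys) = wmap \<alpha> xs \<circ> wmap \<alpha> ys"
  by (induction xs) auto

lemma reflection_linear: "linear (reflection v)"
  by (rule linearI) (simp_all add: reflection_def algebra_simps inner_add_left scaleR_diff_right add_divide_distrib)

lemma reflection_inner: "v \<noteq> 0 \<Longrightarrow> reflection v x \<bullet> reflection v y = x \<bullet> y"
  by (simp add: reflection_def inner_diff_left inner_diff_right algebra_simps power2_eq_square inner_commute)

lemma reflection_invol: "v \<noteq> 0 \<Longrightarrow> reflection v (reflection v x) = x"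
  by (simp add: reflection_def inner_diff_left algebra_simps)

lemma reflection_conj:
  assumes "linear w" "\<And>x y. w x \<bullet> w y = x \<bullet> y"
  shows "w (reflection v x) = reflection (w v) (w x)"
  using assms by (simp add: reflection_def linear_diff linear_cmul)

context ss begin

lemma W_iff: "w \<in> weyl_group \<alpha> n \<longleftrightarrow> (\<exists>ws. set ws \<subseteq> A \<and> w = wmap \<alpha> ws)"
proof
  assume "w \<in> weyl_group \<alpha> n" thus "\<exists>ws. set ws \<subseteq> A \<and> w = wmap \<alpha> ws"
  proof induction
    case id show ?case by (rule exI[of _ "[]"]) simp
  next
    case (refl w i)
    then obtain ws where "set ws \<subseteq> A" "w = wmap \<alpha> ws" by blast
    thus ?case using refl by (intro exI[of _ "i # ws"]) auto
  qed
next
  assume "\<exists>ws. set ws \<subseteq> A \<and> w = wmap \<alpha> ws"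
  then obtain ws where ws: "set ws \<subseteq> A" "w = wmap \<alpha> ws" by blast
  have "set ws \<subseteq> A \<Longrightarrow> wmap \<alpha> ws \<in> weyl_group \<alpha> n"
    by (induction ws) (auto intro: weyl_group.intros)
  thus "w \<in> weyl_group \<alpha> n" using ws by simp
qed

lemma wmap_linear: "linear (wmap \<alpha> ws)"
proof (induction ws)
  case Nil show ?case using linear_id by (simp add: id_def)
next
  case (Cons i ws) show ?case using linear_compose[OF Cons.IH reflection_linear, of "\<alpha> i"] by (simp add: o_def)
qed

lemma wmap_inner: "set ws \<subseteq> A \<Longrightarrow> wmap \<alpha> ws x \<bullet> wmap \<alpha> ws y = x \<bullet> y"
  by (induction ws arbitrary: x y) (auto simp: reflection_inner nz)

lemma wmap_rev: "set ws \<subseteq> A \<Longrightarrow> wmap \<alpha> (rev ws) (wmap \<alpha> ws x) = x"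
  by (induction ws arbitrary: x) (auto simp: wmap_append reflection_invol nz)

definition cv :: "nat \<Rightarrow> 'a \<Rightarrow> real" where "cv i x = 2 * (x \<bullet> \<alpha> i) / (\<alpha> i \<bullet> \<alpha> i)"

lemma refl_eq: "reflection (\<alpha> i) x = x - cv i x *\<^sub>R \<alpha> i"
  by (simp add: reflection_def cv_def)

lemma rc_refl: "i \<in> A \<Longrightarrow> rc l (reflection (\<alpha> i) x) = rc l x - cv i x * (if l = i then 1 else 0)"
  by (cases "l \<in> A") (auto simp: refl_eq rc_diff rc_scale rc_alpha rc_out)

lemma cv_repr: "cv i x = (\<Sum>l\<in>A. rc l x * cv i (\<alpha> l))"
  unfolding cv_def by (subst inner_repr) (simp add: sum_divide_distrib sum_distrib_left algebra_simps)

lemma cv_alpha_int: "i \<in> A \<Longrightarrow> l \<in> A \<Longrightarrow> cv i (\<alpha> l) \<in> \<int>"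
proof (cases "l = i")
  case True assume "i \<in> A" thus ?thesis using True npos[of i] by (simp add: cv_def)
next
  case False assume "i \<in> A" "l \<in> A" thus ?thesis using False cartanZ[of l i] by (simp add: cv_def cartan_int_def)
qed

definition RL :: "'a \<Rightarrow> bool" where "RL x \<longleftrightarrow> (\<forall>l\<in>A. rc l x \<in> \<int>)"
definition CL :: "'a \<Rightarrow> bool" where "CL x \<longleftrightarrow> (\<forall>l\<in>A. rc l x * (\<alpha> l \<bullet> \<alpha> l) / 2 \<in> \<int>)"

lemma RL_cv: "RL x \<Longrightarrow> i \<in> A \<Longrightarrow> cv i x \<in> \<int>"
  unfolding cv_repr[of i x] RL_def by (intro Ints_sum Ints_mult cv_alpha_int) auto

lemma CL_inner: assumes "CL x" "i \<in> A" shows "x \<bullet> \<alpha> i \<in> \<int>"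
proof -
  have "x \<bullet> \<alpha> i = (\<Sum>l\<in>A. (rc l x * (\<alpha> l \<bullet> \<alpha> l) / 2) * cv l (\<alpha> i))"
    unfolding inner_repr[of x] by (rule sum.cong) (auto simp: cv_def inner_commute dest: npos)
  also have "\<dots> \<in> \<int>" using assms unfolding CL_def
    by (intro Ints_sum Ints_mult cv_alpha_int) auto
  finally show ?thesis .
qed

lemma RL_refl: "RL x \<Longrightarrow> i \<in> A \<Longrightarrow> RL (reflection (\<alpha> i) x)"
  unfolding RL_def using RL_cv[of x i] by (auto simp: rc_refl RL_def)

lemma CL_refl: assumes "CL x" "i \<in> A" shows "CL (reflection (\<alpha> i) x)"
  unfolding CL_def
proof
  fix l assume l: "l \<in> A"
  have "rc l (reflection (\<alpha> i) x) * (\<alpha> l \<bullet> \<alpha> l) / 2 =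
     rc l x * (\<alpha> l \<bullet> \<alpha> l) / 2 - (if l = i then x \<bullet> \<alpha> i else 0)"
    using assms(2) npos[OF assms(2)] by (auto simp: rc_refl cv_def field_simps)
  also have "\<dots> \<in> \<int>" using assms l CL_inner[OF assms] unfolding CL_def by auto
  finally show "rc l (reflection (\<alpha> i) x) * (\<alpha> l \<bullet> \<alpha> l) / 2 \<in> \<int>" .
qed

lemma RL_wmap: "set ws \<subseteq> A \<Longrightarrow> RL x \<Longrightarrow> RL (wmap \<alpha> ws x)"
  by (induction ws) (auto intro: RL_refl)
lemma CL_wmap: "set ws \<subseteq> A \<Longrightarrow> CL x \<Longrightarrow> CL (wmap \<alpha> ws x)"
  by (induction ws) (auto intro: CL_refl)

end


lemma sum_sym_split:
  fixes g :: "nat \<Rightarrow> nat \<Rightarrow> real"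
  assumes "finite S" "\<And>l m. g l m = g m l"
  shows "(\<Sum>l\<in>S. \<Sum>m\<in>S. g l m) = (\<Sum>l\<in>S. g l l) + 2 * (\<Sum>l\<in>S. \<Sum>m\<in>{m\<in>S. m < l}. g l m)"
proof -
  have split: "(\<Sum>m\<in>S. g l m) = g l l + (\<Sum>m\<in>{m\<in>S. m < l}. g l m) + (\<Sum>m\<in>{m\<in>S. l < m}. g l m)"
    if "l \<in> S" for l
  proof -
    have "(\<Sum>m\<in>S. g l m) = (\<Sum>m\<in>S. (if m = l then g l m else 0) + (if m < l then g l m else 0) + (if l < m then g l m else 0))"
      by (rule sum.cong) auto
    also have "\<dots> = (\<Sum>m\<in>S. if m = l then g l m else 0) + (\<Sum>m\<in>S. if m < l then g l m else 0) + (\<Sum>m\<in>S. if l < m then g l m else 0)"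
      by (simp add: sum.distrib)
    also have "\<dots> = g l l + (\<Sum>m\<in>{m\<in>S. m < l}. g l m) + (\<Sum>m\<in>{m\<in>S. l < m}. g l m)"
      using that assms(1) by (simp add: sum.inter_filter)
    finally show ?thesis .
  qed
  have "(\<Sum>l\<in>S. \<Sum>m\<in>S. g l m) = (\<Sum>l\<in>S. g l l + (\<Sum>m\<in>{m\<in>S. m < l}. g l m) + (\<Sum>m\<in>{m\<in>S. l < m}. g l m))"
    by (rule sum.cong) (auto simp: split)
  also have "\<dots> = (\<Sum>l\<in>S. g l l) + (\<Sum>l\<in>S. \<Sum>m\<in>{m\<in>S. m < l}. g l m) + (\<Sum>l\<in>S. \<Sum>m\<in>{m\<in>S. l < m}. g l m)"
    by (simp add: sum.distrib)
  also have "(\<Sum>l\<in>S. \<Sum>m\<in>{m\<in>S. l < m}. g l m) = (\<Sum>m\<in>S. \<Sum>l\<in>{l\<in>S. l < m}. g l m)"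
    using sum.swap_restrict[OF assms(1) assms(1), of g "\<lambda>l m. l < m"] by simp
  also have "\<dots> = (\<Sum>l\<in>S. \<Sum>m\<in>{m\<in>S. m < l}. g l m)"
    using assms(2) by simp
  finally show ?thesis by simp
qed

context ss begin

definition root :: "'a \<Rightarrow> bool" where
  "root \<beta> \<longleftrightarrow> (\<exists>ws j. set ws \<subseteq> A \<and> j \<in> A \<and> \<beta> = wmap \<alpha> ws (\<alpha> j))"
definition pos :: "'a \<Rightarrow> bool" where "pos x \<longleftrightarrow> (\<forall>l\<in>A. rc l x \<ge> 0)"
definition neg :: "'a \<Rightarrow> bool" where "neg x \<longleftrightarrow> (\<forall>l\<in>A. rc l x \<le> 0)"

lemma root_props:
  assumes "root \<beta>"
  shows "RL \<beta>" "CL ((2 / (\<beta> \<bullet> \<beta>)) *\<^sub>R \<beta>)" "\<beta> \<bullet> \<beta> > 0" "\<beta> \<noteq> 0"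
proof -
  obtain ws j where ws: "set ws \<subseteq> A" "j \<in> A" "\<beta> = wmap \<alpha> ws (\<alpha> j)"
    using assms root_def by blast
  have N: "\<beta> \<bullet> \<beta> = \<alpha> j \<bullet> \<alpha> j" using ws wmap_inner by simp
  thus "\<beta> \<bullet> \<beta> > 0" using npos[OF ws(2)] by simp
  thus "\<beta> \<noteq> 0" by auto
  have "RL (\<alpha> j)" unfolding RL_def using ws(2) by (auto simp: rc_alpha)
  thus "RL \<beta>" using RL_wmap ws by simp
  have "CL ((2 / (\<alpha> j \<bullet> \<alpha> j)) *\<^sub>R \<alpha> j)" unfolding CL_def using ws(2) npos[OF ws(2)]
    by (auto simp: rc_alpha rc_scale)
  hence "CL (wmap \<alpha> ws ((2 / (\<alpha> j \<bullet> \<alpha> j)) *\<^sub>R \<alpha> j))" using CL_wmap ws by simp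
  thus "CL ((2 / (\<beta> \<bullet> \<beta>)) *\<^sub>R \<beta>)" using N ws(3) linear_cmul[OF wmap_linear] by simp
qed

lemma root_refl: "root \<gamma> \<Longrightarrow> i \<in> A \<Longrightarrow> root (reflection (\<alpha> i) \<gamma>)"
proof -
  assume r: "root \<gamma>" and i: "i \<in> A"
  then obtain ws j where ws: "set ws \<subseteq> A" "j \<in> A" "\<gamma> = wmap \<alpha> ws (\<alpha> j)"
    using root_def by blast
  have "set (i # ws) \<subseteq> A \<and> j \<in> A \<and> reflection (\<alpha> i) \<gamma> = wmap \<alpha> (i # ws) (\<alpha> j)"
    using ws i by simp
  thus ?thesis unfolding root_def by blast
qed

lemma norm_ge:
  assumes N: "N > 0" and k: "\<And>l. l \<in> A \<Longrightarrow> k l \<ge> 0 \<and> k l \<in> \<int> \<and> k l * (\<alpha> l \<bullet> \<alpha> l) / N \<in> \<int>"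
    and a: "a \<in> A" "k a > 0"
  shows "(\<Sum>l\<in>A. k l *\<^sub>R \<alpha> l) \<bullet> (\<Sum>l\<in>A. k l *\<^sub>R \<alpha> l) \<ge> N"
proof -
  define v where "v = (\<Sum>l\<in>A. k l *\<^sub>R \<alpha> l)"
  define g where "g l m = k l * k m * (\<alpha> l \<bullet> \<alpha> m) / N" for l m
  have "v \<bullet> v / N = (\<Sum>l\<in>A. \<Sum>m\<in>A. g l m)"
    unfolding v_def g_def by (simp add: inner_sum_left inner_sum_right sum_divide_distrib sum_distrib_left algebra_simps inner_commute)
  also have "\<dots> = (\<Sum>l\<in>A. g l l) + 2 * (\<Sum>l\<in>A. \<Sum>m\<in>{m\<in>A. m < l}. g l m)"
    by (rule sum_sym_split) (auto simp: g_def inner_commute)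
  also have "\<dots> \<in> \<int>"
  proof (intro Ints_add Ints_sum)
    fix l assume l: "l \<in> A"
    have "g l l = k l * (k l * (\<alpha> l \<bullet> \<alpha> l) / N)" by (simp add: g_def)
    thus "g l l \<in> \<int>" using k[OF l] Ints_mult by (simp only:) blast
  next
    have "2 * (\<Sum>l\<in>A. \<Sum>m\<in>{m\<in>A. m < l}. g l m) = (\<Sum>l\<in>A. \<Sum>m\<in>{m\<in>A. m < l}. 2 * g l m)"
      by (simp add: sum_distrib_left)
    also have "\<dots> \<in> \<int>"
    proof (intro Ints_sum)
      fix l m assume l: "l \<in> A" and m: "m \<in> {m\<in>A. m < l}"
      hence mA: "m \<in> A" by simp
      have "2 * g l m = k l * (k m * (\<alpha> m \<bullet> \<alpha> m) / N) * cv m (\<alpha> l)"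
        using npos[OF mA] by (simp add: g_def cv_def field_simps)
      thus "2 * g l m \<in> \<int>" using k[OF l] k[OF mA] cv_alpha_int[OF mA l] Ints_mult by (simp only:) blast
    qed
    finally show "2 * (\<Sum>l\<in>A. \<Sum>m\<in>{m\<in>A. m < l}. g l m) \<in> \<int>" .
  qed
  finally have Z: "v \<bullet> v / N \<in> \<int>" .
  have "rc a v = k a" unfolding v_def by (rule rc_eq[OF HOL.refl a(1)])
  hence "v \<noteq> 0" using a(2) by (auto simp: rc_out linear_0[OF rc_linear])
  hence "v \<bullet> v / N > 0" using N by simp
  with Z have "v \<bullet> v / N \<ge> 1"
    by (metis Ints_cases of_int_0_less_iff of_int_1_le_iff zero_less_imp_eq_int less_le_not_le int_one_le_iff_zero_less)
  thus ?thesis using N unfolding v_def[symmetric] by (simp add: field_simps)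
qed

end


context ss begin

lemma root_coherent: assumes r: "root \<beta>" shows "pos \<beta> \<or> neg \<beta>"
proof (rule ccontr)
  assume H: "\<not> (pos \<beta> \<or> neg \<beta>)"
  then obtain b where b: "b \<in> A" "rc b \<beta> < 0" unfolding pos_def by force
  from H obtain a where a: "a \<in> A" "rc a \<beta> > 0" unfolding neg_def by force
  define N where "N = \<beta> \<bullet> \<beta>"
  have N: "N > 0" using root_props(3)[OF r] N_def by simp
  define k where "k l = rc l \<beta>" for l
  have kZ: "k l \<in> \<int>" if "l \<in> A" for l using root_props(1)[OF r] that unfolding RL_def k_def by blast
  have kq: "k l * (\<alpha> l \<bullet> \<alpha> l) / N \<in> \<int>" if "l \<in> A" for l
  proof -
    have "rc l ((2 / N) *\<^sub>R \<beta>) * (\<alpha> l \<bullet> \<alpha> l) / 2 \<in> \<int>"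
      using root_props(2)[OF r] that unfolding CL_def N_def by blast
    also have "rc l ((2 / N) *\<^sub>R \<beta>) * (\<alpha> l \<bullet> \<alpha> l) / 2 = k l * (\<alpha> l \<bullet> \<alpha> l) / N"
      by (simp add: rc_scale k_def)
    finally show ?thesis .
  qed
  define kp where "kp l = max (k l) 0" for l
  define kn where "kn l = max (- k l) 0" for l
  have kp: "kp l \<ge> 0 \<and> kp l \<in> \<int> \<and> kp l * (\<alpha> l \<bullet> \<alpha> l) / N \<in> \<int>" if "l \<in> A" for l
    using kZ[OF that] kq[OF that] by (auto simp: kp_def max_def)
  have kn: "kn l \<ge> 0 \<and> kn l \<in> \<int> \<and> kn l * (\<alpha> l \<bullet> \<alpha> l) / N \<in> \<int>" if "l \<in> A" for l
  proof -
    have "- (k l * (\<alpha> l \<bullet> \<alpha> l) / N) \<in> \<int>" using kq[OF that] by (rule Ints_minus)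
    hence "(- k l) * (\<alpha> l \<bullet> \<alpha> l) / N \<in> \<int>" by simp
    thus ?thesis using kZ[OF that] by (auto simp: kn_def max_def)
  qed
  define vp where "vp = (\<Sum>l\<in>A. kp l *\<^sub>R \<alpha> l)"
  define vn where "vn = (\<Sum>l\<in>A. kn l *\<^sub>R \<alpha> l)"
  have "\<beta> = (\<Sum>l\<in>A. k l *\<^sub>R \<alpha> l)" unfolding k_def by (rule rc_repr)
  also have "\<dots> = (\<Sum>l\<in>A. (kp l - kn l) *\<^sub>R \<alpha> l)"
    by (rule sum.cong) (auto simp: kp_def kn_def max_def)
  also have "\<dots> = vp - vn" by (simp add: vp_def vn_def scaleR_diff_left sum_subtractf)
  finally have bv: "\<beta> = vp - vn" .
  have "vp \<bullet> vn = (\<Sum>l\<in>A. kp l * (\<alpha> l \<bullet> vn))" by (simp add: vp_def inner_sum_left)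
  also have "\<dots> = (\<Sum>l\<in>A. \<Sum>m\<in>A. kp l * kn m * (\<alpha> l \<bullet> \<alpha> m))"
    by (simp add: vn_def inner_sum_right sum_distrib_left mult.assoc mult.left_commute)
  also have "\<dots> \<le> 0"
  proof (intro sum_nonpos)
    fix l m assume l: "l \<in> A" and m: "m \<in> A"
    show "kp l * kn m * (\<alpha> l \<bullet> \<alpha> m) \<le> 0"
    proof (cases "l = m")
      case True thus ?thesis by (simp add: kp_def kn_def max_def)
    next
      case False
      have "kp l * kn m \<ge> 0" using kp[OF l] kn[OF m] by simp
      thus ?thesis using obtuse[OF l m False] by (simp add: mult_nonneg_nonpos)
    qed
  qed
  finally have cross: "vp \<bullet> vn \<le> 0" .
  have "N = vp \<bullet> vp - 2 * (vp \<bullet> vn) + vn \<bullet> vn"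
    unfolding N_def bv by (simp add: inner_diff_left inner_diff_right inner_commute)
  moreover have "vp \<bullet> vp \<ge> N" unfolding vp_def
    by (rule norm_ge[OF N kp a(1)]) (use a kZ in \<open>auto simp: kp_def k_def\<close>)
  moreover have "vn \<bullet> vn \<ge> N" unfolding vn_def
    by (rule norm_ge[OF N kn b(1)]) (use b in \<open>auto simp: kn_def k_def\<close>)
  ultimately show False using N cross by linarith
qed

lemma root_simple:
  assumes r: "root \<gamma>" and p: "pos \<gamma>" and i: "i \<in> A" and np: "\<not> pos (reflection (\<alpha> i) \<gamma>)"
  shows "\<gamma> = \<alpha> i"
proof -
  have "neg (reflection (\<alpha> i) \<gamma>)" using root_coherent[OF root_refl[OF r i]] np by blast
  hence z: "rc l \<gamma> = 0" if "l \<in> A" "l \<noteq> i" for l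
    using p that unfolding neg_def pos_def by (force simp: rc_refl[OF i])
  define c where "c = rc i \<gamma>"
  have g: "\<gamma> = c *\<^sub>R \<alpha> i"
  proof (rule ext_rc)
    fix l assume l: "l \<in> A"
    show "rc l \<gamma> = rc l (c *\<^sub>R \<alpha> i)"
      using z[OF l] i by (cases "l = i") (auto simp: rc_scale rc_alpha c_def)
  qed
  have "c \<noteq> 0" using root_props(4)[OF r] g by auto
  moreover have "c \<ge> 0" using p i unfolding pos_def c_def by blast
  ultimately have cpos: "c > 0" by simp
  have cZ: "c \<in> \<int>" using root_props(1)[OF r] i unfolding RL_def c_def by blast
  have "rc i ((2 / (\<gamma> \<bullet> \<gamma>)) *\<^sub>R \<gamma>) * (\<alpha> i \<bullet> \<alpha> i) / 2 \<in> \<int>"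
    using root_props(2)[OF r] i unfolding CL_def by blast
  also have "rc i ((2 / (\<gamma> \<bullet> \<gamma>)) *\<^sub>R \<gamma>) * (\<alpha> i \<bullet> \<alpha> i) / 2 = 1 / c"
    using cpos npos[OF i] unfolding g by (simp add: rc_scale rc_alpha[OF i] field_simps power2_eq_square)
  finally have ic: "1 / c \<in> \<int>" .
  have "c \<ge> 1" using cZ cpos
    by (metis Ints_cases of_int_0_less_iff of_int_1_le_iff zero_less_imp_eq_int less_le_not_le int_one_le_iff_zero_less)
  hence "1 / c \<le> 1" "1 / c > 0" by auto
  hence "1 / c = 1" using ic
    by (metis Ints_cases of_int_0_less_iff of_int_1_le_iff zero_less_imp_eq_int less_le_not_le int_one_le_iff_zero_less antisym)
  hence "c = 1" by (simp add: field_simps)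
  thus ?thesis using g by simp
qed

lemma exch:
  assumes "set as \<subseteq> A" "i \<in> A" "\<not> pos (wmap \<alpha> as (\<alpha> i))"
  shows "\<exists>as'. set as' \<subseteq> A \<and> length as' < length as \<and> wmap \<alpha> (as @ [i]) = wmap \<alpha> as'"
  using assms
proof (induction as)
  case Nil thus ?case by (auto simp: pos_def rc_alpha split: if_splits)
next
  case (Cons j as0)
  show ?case
  proof (cases "pos (wmap \<alpha> as0 (\<alpha> i))")
    case False
    then obtain as0' where "set as0' \<subseteq> A" "length as0' < length as0" "wmap \<alpha> (as0 @ [i]) = wmap \<alpha> as0'"
      using Cons by auto
    thus ?thesis using Cons.prems by (intro exI[of _ "j # as0'"]) auto
  next
    case True
    have j: "j \<in> A" and as0: "set as0 \<subseteq> A" using Cons.prems by auto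
    have r: "root (wmap \<alpha> as0 (\<alpha> i))" unfolding root_def using as0 Cons.prems(2) by blast
    have "\<not> pos (reflection (\<alpha> j) (wmap \<alpha> as0 (\<alpha> i)))" using Cons.prems(3) by simp
    from root_simple[OF r True j this] have ga: "wmap \<alpha> as0 (\<alpha> i) = \<alpha> j" .
    have "wmap \<alpha> ((j # as0) @ [i]) = wmap \<alpha> as0"
    proof
      fix x
      have "wmap \<alpha> as0 (reflection (\<alpha> i) x) = reflection (wmap \<alpha> as0 (\<alpha> i)) (wmap \<alpha> as0 x)"
        by (rule reflection_conj[OF wmap_linear wmap_inner[OF as0]])
      thus "wmap \<alpha> ((j # as0) @ [i]) x = wmap \<alpha> as0 x"
        using ga by (simp add: wmap_append reflection_invol nz[OF j])
    qed
    thus ?thesis using as0 by (intro exI[of _ as0]) auto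
  qed
qed

lemma pos_add: "pos x \<Longrightarrow> pos y \<Longrightarrow> pos (x + y)" by (auto simp: pos_def rc_add)
lemma pos_scale: "c \<ge> 0 \<Longrightarrow> pos x \<Longrightarrow> pos (c *\<^sub>R x)" by (auto simp: pos_def rc_scale)

definition dom :: "'a \<Rightarrow> bool" where "dom \<mu> \<longleftrightarrow> (\<forall>l\<in>A. cv l \<mu> \<ge> 0)"

lemma key_word:
  assumes "\<And>as i bs. ws = as @ i # bs \<Longrightarrow> pos (wmap \<alpha> as (\<alpha> i))" "set ws \<subseteq> A" "dom \<mu>"
  shows "pos (\<mu> - wmap \<alpha> ws \<mu>)"
  using assms(1,2)
proof (induction ws rule: rev_induct)
  case Nil thus ?case by (simp add: pos_def linear_0[OF rc_linear])
next
  case (snoc i as)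
  have i: "i \<in> A" using snoc.prems by simp
  have p1: "pos (\<mu> - wmap \<alpha> as \<mu>)"
    using snoc.IH snoc.prems by force
  have p2: "pos (wmap \<alpha> as (\<alpha> i))" using snoc.prems(1)[of as i "[]"] by simp
  have "\<mu> - wmap \<alpha> (as @ [i]) \<mu> = (\<mu> - wmap \<alpha> as \<mu>) + wmap \<alpha> as (\<mu> - reflection (\<alpha> i) \<mu>)"
    by (simp add: wmap_append linear_diff[OF wmap_linear])
  also have "\<mu> - reflection (\<alpha> i) \<mu> = cv i \<mu> *\<^sub>R \<alpha> i" by (simp add: refl_eq)
  finally have eq: "\<mu> - wmap \<alpha> (as @ [i]) \<mu> = (\<mu> - wmap \<alpha> as \<mu>) + cv i \<mu> *\<^sub>R wmap \<alpha> as (\<alpha> i)"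
    by (simp add: linear_cmul[OF wmap_linear])
  have "cv i \<mu> \<ge> 0" using assms(3) i unfolding dom_def by blast
  hence "pos ((\<mu> - wmap \<alpha> as \<mu>) + cv i \<mu> *\<^sub>R wmap \<alpha> as (\<alpha> i))"
    using p1 p2 by (intro pos_add pos_scale)
  thus ?case by (simp only: eq)
qed

lemma key:
  assumes "w \<in> weyl_group \<alpha> n" "dom \<mu>"
  shows "pos (\<mu> - w \<mu>)"
proof -
  let ?P = "\<lambda>ws. set ws \<subseteq> A \<and> w = wmap \<alpha> ws"
  obtain ws0 where "?P ws0" using assms(1) W_iff by blast
  then obtain ws where ws: "?P ws" and min: "\<And>ws'. ?P ws' \<Longrightarrow> length ws \<le> length ws'"
    using ex_has_least_nat[of ?P ws0 length] by blast
  have H: "pos (wmap \<alpha> as (\<alpha> i))" if e: "ws = as @ i # bs" for as i bs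
  proof (rule ccontr)
    assume np: "\<not> pos (wmap \<alpha> as (\<alpha> i))"
    have "set as \<subseteq> A" "i \<in> A" "set bs \<subseteq> A" using ws e by auto
    then obtain as' where as': "set as' \<subseteq> A" "length as' < length as" "wmap \<alpha> (as @ [i]) = wmap \<alpha> as'"
      using exch np by blast
    have "wmap \<alpha> ws = wmap \<alpha> (as @ [i]) \<circ> wmap \<alpha> bs" using e by (simp add: wmap_append o_assoc)
    also have "\<dots> = wmap \<alpha> (as' @ bs)" using as' by (simp add: wmap_append)
    finally have "?P (as' @ bs)" using ws as' \<open>set bs \<subseteq> A\<close> by auto
    from min[OF this] show False using as' e by simp
  qed
  have "pos (\<mu> - wmap \<alpha> ws \<mu>)" by (rule key_word[OF H]) (use ws assms(2) in auto)
  thus ?thesis using ws by simp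
qed

end


context ss begin

lemma lc_sub: "lam_component \<alpha> lam S \<subseteq> S"
proof
  fix j assume "j \<in> lam_component \<alpha> lam S" thus "j \<in> S" by induction auto
qed

lemma cv_linear: "linear (cv i)"
  by (rule linearI) (simp_all add: cv_def inner_add_left add_divide_distrib)

lemma cv_lt_iff: "i \<in> A \<Longrightarrow> cv i x < 0 \<longleftrightarrow> x \<bullet> \<alpha> i < 0"
  unfolding cv_def using pos_divide_less_eq[OF npos[of i], of "2 * (x \<bullet> \<alpha> i)" 0] by simp
lemma cv_gt_iff: "i \<in> A \<Longrightarrow> cv i x > 0 \<longleftrightarrow> x \<bullet> \<alpha> i > 0"
  unfolding cv_def using pos_less_divide_eq[OF npos[of i], of 0 "2 * (x \<bullet> \<alpha> i)"] by simp
lemma cv_eq0_iff: "i \<in> A \<Longrightarrow> cv i x = 0 \<longleftrightarrow> x \<bullet> \<alpha> i = 0"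
  using npos[of i] by (simp add: cv_def)

lemma W_comp: "w \<in> weyl_group \<alpha> n \<Longrightarrow> i \<in> A \<Longrightarrow> reflection (\<alpha> i) \<circ> w \<in> weyl_group \<alpha> n"
  by (rule weyl_group.refl) auto

lemma W_inv: assumes "w \<in> weyl_group \<alpha> n" shows "\<exists>w'\<in>weyl_group \<alpha> n. \<forall>x. w' (w x) = x"
proof -
  obtain ws where ws: "set ws \<subseteq> A" "w = wmap \<alpha> ws" using assms W_iff by blast
  have "set (rev ws) \<subseteq> A" using ws by simp
  hence "wmap \<alpha> (rev ws) \<in> weyl_group \<alpha> n" using W_iff[of "wmap \<alpha> (rev ws)"] by blast
  thus ?thesis using wmap_rev[OF ws(1)] ws(2) by blast
qed

end

locale ssl = ss +
  fixes lam :: 'a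
  assumes di: "dominant_integral \<alpha> n lam"
begin

abbreviation "m i \<equiv> rc i lam"
abbreviation "Vx \<equiv> {w lam | w. w \<in> weyl_group \<alpha> n}"
abbreviation "PP \<equiv> weight_polytope \<alpha> n lam"

lemma cv_lam_nat: assumes i: "i \<in> A" shows "cv i lam \<in> \<nat>"
proof -
  have "\<forall>i\<in>{1..n}. 2 * (lam \<bullet> \<alpha> i) / (\<alpha> i \<bullet> \<alpha> i) \<in> \<nat>"
    using di unfolding dominant_integral_def .
  hence "2 * (lam \<bullet> \<alpha> i) / (\<alpha> i \<bullet> \<alpha> i) \<in> \<nat>" using i by (rule bspec)
  thus ?thesis by (simp only: cv_def)
qed
lemma cv_lam_nonneg: assumes i: "i \<in> A" shows "cv i lam \<ge> 0"
proof -
  obtain k where "cv i lam = of_nat k" using cv_lam_nat[OF i] Nats_cases by blast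
  thus ?thesis by simp
qed
lemma dom_lam: "dom lam" unfolding dom_def using cv_lam_nonneg by blast
lemma lam_inner_nonneg: "i \<in> A \<Longrightarrow> lam \<bullet> \<alpha> i \<ge> 0"
  using cv_lam_nonneg[of i] cv_lt_iff[of i lam] by linarith

lemma V_le: assumes v: "v \<in> Vx" and l: "l \<in> A" shows "rc l v \<le> m l"
proof -
  obtain w where w: "w \<in> weyl_group \<alpha> n" "v = w lam" using v by blast
  have "pos (lam - w lam)" by (rule key[OF w(1) dom_lam])
  hence "rc l (lam - w lam) \<ge> 0" using l unfolding pos_def by blast
  thus ?thesis using w(2) by (simp add: rc_diff)
qed

lemma V_sub_P: "Vx \<subseteq> PP" unfolding weight_polytope_def by (rule hull_subset)

lemma P_le: assumes "x \<in> PP" "l \<in> A" shows "rc l x \<le> m l"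
proof -
  have "convex {x. rc l x \<le> m l}"
  proof (rule convexI)
    fix x y :: 'a and u v :: real assume "x \<in> {x. rc l x \<le> m l}" "y \<in> {x. rc l x \<le> m l}"
      "0 \<le> u" "0 \<le> v" "u + v = 1"
    hence "u * rc l x + v * rc l y \<le> u * m l + v * m l"
      by (intro add_mono mult_left_mono) auto
    also have "\<dots> = m l" using \<open>u + v = 1\<close> by (simp add: algebra_simps flip: distrib_right)
    finally show "u *\<^sub>R x + v *\<^sub>R y \<in> {x. rc l x \<le> m l}" by (simp add: rc_add rc_scale)
  qed
  moreover have "Vx \<subseteq> {x. rc l x \<le> m l}" using V_le assms(2) by blast
  ultimately have "PP \<subseteq> {x. rc l x \<le> m l}" unfolding weight_polytope_def by (rule hull_minimal[rotated])
  thus ?thesis using assms(1) by blast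
qed

lemma refl_P: assumes "i \<in> A" "x \<in> PP" shows "reflection (\<alpha> i) x \<in> PP"
proof -
  have "reflection (\<alpha> i) ` Vx \<subseteq> Vx"
  proof
    fix y assume "y \<in> reflection (\<alpha> i) ` Vx"
    then obtain w where "w \<in> weyl_group \<alpha> n" "y = reflection (\<alpha> i) (w lam)" by blast
    thus "y \<in> Vx" using W_comp[OF _ assms(1)] by (metis (mono_tags, lifting) comp_apply mem_Collect_eq)
  qed
  hence "convex hull (reflection (\<alpha> i) ` Vx) \<subseteq> convex hull Vx" by (rule hull_mono)
  moreover have "reflection (\<alpha> i) ` PP = convex hull (reflection (\<alpha> i) ` Vx)"
    unfolding weight_polytope_def by (rule convex_hull_linear_image[OF reflection_linear])
  ultimately show ?thesis using assms(2) unfolding weight_polytope_def by blast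
qed

lemma lam_V: "lam \<in> Vx"
  unfolding mem_Collect_eq by (rule exI[of _ id]) (simp add: weyl_group.id)

end


context ssl begin

abbreviation "FF I \<equiv> weight_face \<alpha> n lam I"
abbreviation "KK I \<equiv> lam_component \<alpha> lam (A - I)"

lemma FF_iff: "x \<in> FF I \<longleftrightarrow> x \<in> PP \<and> (\<forall>i\<in>I. rc i x = m i)"
  unfolding weight_face_def by simp

lemma compw: assumes "j \<in> KK I" shows "\<exists>x\<in>FF I. rc j x < m j"
  using assms
proof induction
  case (base j)
  have j: "j \<in> A" "j \<notin> I" using base by auto
  define x where "x = reflection (\<alpha> j) lam"
  have "reflection (\<alpha> j) \<circ> id \<in> weyl_group \<alpha> n" by (rule W_comp[OF weyl_group.id j(1)])
  hence "x \<in> Vx" unfolding x_def by force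
  hence xP: "x \<in> PP" using V_sub_P by blast
  have rcx: "rc l x = m l - cv j lam * (if l = j then 1 else 0)" for l
    unfolding x_def by (rule rc_refl[OF j(1)])
  have "cv j lam > 0" using cv_gt_iff[OF j(1)] base(2) by simp
  hence "rc j x < m j" using rcx[of j] by simp
  moreover have "x \<in> FF I" unfolding FF_iff using xP j(2) rcx by auto
  ultimately show ?case by blast
next
  case (step i j)
  obtain x where x: "x \<in> FF I" "rc i x < m i" using step.IH by blast
  have i: "i \<in> A" using step.hyps(1) lc_sub by blast
  have j: "j \<in> A" "j \<notin> I" using step.hyps(2) by auto
  have ij: "i \<noteq> j" "\<alpha> i \<bullet> \<alpha> j \<noteq> 0" using step.hyps(3) unfolding dynkin_adj_def by auto
  have xP: "x \<in> PP" using x(1) FF_iff by blast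
  show ?case
  proof (cases "rc j x < m j")
    case True thus ?thesis using x by blast
  next
    case False
    hence xj: "rc j x = m j" using P_le[OF xP j(1)] by simp
    define D where "D = lam - x"
    have dD: "rc l D = m l - rc l x" for l by (simp add: D_def rc_diff)
    have "D \<bullet> \<alpha> j = (\<Sum>l\<in>A. rc l D * (\<alpha> l \<bullet> \<alpha> j))" by (rule inner_repr)
    also have "\<dots> = rc i D * (\<alpha> i \<bullet> \<alpha> j) + (\<Sum>l\<in>A - {i}. rc l D * (\<alpha> l \<bullet> \<alpha> j))"
      using i by (simp add: sum.remove)
    also have "\<dots> < 0"
    proof -
      have "(\<Sum>l\<in>A - {i}. rc l D * (\<alpha> l \<bullet> \<alpha> j)) \<le> 0"
      proof (rule sum_nonpos)
        fix l assume l: "l \<in> A - {i}"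
        show "rc l D * (\<alpha> l \<bullet> \<alpha> j) \<le> 0"
        proof (cases "l = j")
          case True thus ?thesis using xj dD by simp
        next
          case False
          have "rc l D \<ge> 0" using P_le[OF xP] l dD by simp
          thus ?thesis using obtuse[of l j] l j False by (simp add: mult_nonneg_nonpos)
        qed
      qed
      moreover have "rc i D > 0" using x(2) dD by simp
      moreover have "\<alpha> i \<bullet> \<alpha> j < 0" using obtuse[OF i j(1) ij(1)] ij(2) by simp
      ultimately show ?thesis by (smt (verit) mult_pos_neg)
    qed
    finally have "D \<bullet> \<alpha> j < 0" .
    moreover have "lam \<bullet> \<alpha> j \<ge> 0" by (rule lam_inner_nonneg[OF j(1)])
    ultimately have "x \<bullet> \<alpha> j > 0" unfolding D_def by (simp add: inner_diff_left)
    hence cpos: "cv j x > 0" using cv_gt_iff[OF j(1)] by simp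
    define y where "y = reflection (\<alpha> j) x"
    have rcy: "rc l y = rc l x - cv j x * (if l = j then 1 else 0)" for l
      unfolding y_def by (rule rc_refl[OF j(1)])
    have "y \<in> PP" unfolding y_def by (rule refl_P[OF j(1) xP])
    moreover have "\<forall>l\<in>I. rc l y = m l" using x(1) j(2) rcy unfolding FF_iff by auto
    ultimately have "y \<in> FF I" unfolding FF_iff by blast
    moreover have "rc j y < m j" using rcy[of j] xj cpos by simp
    ultimately show ?thesis by blast
  qed
qed

lemma RL_diff: "w \<in> weyl_group \<alpha> n \<Longrightarrow> RL (lam - w lam)"
proof (induction rule: weyl_group.induct)
  case id show ?case by (simp add: RL_def linear_0[OF rc_linear])
next
  case (refl w i)
  have i: "i \<in> A" using refl by simp
  have cvZ: "cv i (w lam) \<in> \<int>"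
  proof -
    have "cv i (w lam) = cv i lam - cv i (lam - w lam)" by (simp add: linear_diff[OF cv_linear])
    moreover have "cv i lam \<in> \<int>" using cv_lam_nat[OF i] Nats_subset_Ints by blast
    moreover have "cv i (lam - w lam) \<in> \<int>" by (rule RL_cv[OF refl.IH i])
    ultimately show ?thesis by simp
  qed
  show ?case unfolding RL_def
  proof
    fix l assume l: "l \<in> A"
    have "rc l (lam - (reflection (\<alpha> i) \<circ> w) lam) = rc l (lam - w lam) + cv i (w lam) * (if l = i then 1 else 0)"
      by (simp add: rc_diff rc_refl[OF i])
    also have "\<dots> \<in> \<int>" using refl.IH l cvZ unfolding RL_def by auto
    finally show "rc l (lam - (reflection (\<alpha> i) \<circ> w) lam) \<in> \<int>" .
  qed
qed

definition H :: "'a \<Rightarrow> real" where "H \<mu> = (\<Sum>l\<in>A. rc l (lam - \<mu>))"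

lemma H_nat: assumes "\<mu> \<in> Vx" shows "\<exists>k. H \<mu> = of_nat k"
proof -
  obtain w where w: "w \<in> weyl_group \<alpha> n" "\<mu> = w lam" using assms by blast
  have "H \<mu> \<in> \<int>" unfolding H_def using RL_diff[OF w(1)] w(2) unfolding RL_def by (intro Ints_sum) auto
  moreover have "H \<mu> \<ge> 0" unfolding H_def using key[OF w(1) dom_lam] w(2) unfolding pos_def
    by (intro sum_nonneg) auto
  ultimately obtain z where "H \<mu> = of_int z" "z \<ge> 0" by (metis Ints_cases of_int_0_le_iff)
  thus ?thesis by (intro exI[of _ "nat z"]) simp
qed

lemma vertex_aux:
  "\<forall>\<mu>. \<mu> \<in> Vx \<longrightarrow> H \<mu> = of_nat k \<longrightarrow> (\<forall>i\<in>I. rc i \<mu> = m i) \<longrightarrow> (\<forall>j\<in>A. j \<notin> KK I \<longrightarrow> rc j \<mu> = m j)"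
proof (induction k rule: less_induct)
  case (less k)
  show ?case
  proof (intro allI impI)
    fix \<mu> assume mu: "\<mu> \<in> Vx" and Hk: "H \<mu> = of_nat k" and hI: "\<forall>i\<in>I. rc i \<mu> = m i"
    show "\<forall>j\<in>A. j \<notin> KK I \<longrightarrow> rc j \<mu> = m j"
    proof (cases "\<mu> = lam")
      case True thus ?thesis by simp
    next
      case False
      obtain w where w: "w \<in> weyl_group \<alpha> n" "\<mu> = w lam" using mu by blast
      have "\<not> dom \<mu>"
      proof
        assume dm: "dom \<mu>"
        obtain w' where w': "w' \<in> weyl_group \<alpha> n" "\<forall>x. w' (w x) = x" using W_inv[OF w(1)] by blast
        have p1: "pos (\<mu> - lam)" using key[OF w'(1) dm] w' w(2) by simp
        have p2: "pos (lam - \<mu>)" using key[OF w(1) dom_lam] w(2) by simp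
        have "\<mu> = lam"
        proof (rule ext_rc)
          fix l assume "l \<in> A"
          thus "rc l \<mu> = rc l lam" using p1 p2 unfolding pos_def by (force simp: rc_diff)
        qed
        with False show False by simp
      qed
      then obtain i where i: "i \<in> A" "cv i \<mu> < 0" unfolding dom_def by force
      define c where "c = - cv i \<mu>"
      have cpos: "c > 0" using i c_def by simp
      define \<mu>' where "\<mu>' = reflection (\<alpha> i) \<mu>"
      have rc': "rc l \<mu>' = rc l \<mu> + c * (if l = i then 1 else 0)" for l
        unfolding \<mu>'_def c_def by (simp add: rc_refl[OF i(1)])
      have mu': "\<mu>' \<in> Vx"
      proof -
        have "reflection (\<alpha> i) \<circ> w \<in> weyl_group \<alpha> n" by (rule W_comp[OF w(1) i(1)])
        moreover have "\<mu>' = (reflection (\<alpha> i) \<circ> w) lam" using w(2) \<mu>'_def by simp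
        ultimately show ?thesis by blast
      qed
      have iI: "i \<notin> I"
      proof
        assume "i \<in> I"
        hence "rc i \<mu> = m i" using hI by blast
        moreover have "rc i \<mu>' \<le> m i" by (rule V_le[OF mu' i(1)])
        ultimately show False using rc'[of i] cpos by simp
      qed
      have hI': "\<forall>l\<in>I. rc l \<mu>' = m l" using hI rc' iI by auto
      have "H \<mu>' = (\<Sum>l\<in>A. rc l (lam - \<mu>) - c * (if l = i then 1 else 0))"
        unfolding H_def by (rule sum.cong) (simp_all add: rc_diff rc')
      also have "\<dots> = H \<mu> - (\<Sum>l\<in>A. c * (if l = i then 1 else 0))" by (simp add: H_def sum_subtractf)
      also have "(\<Sum>l\<in>A. c * (if l = i then 1 else 0)) = (\<Sum>l\<in>A. if l = i then c else 0)"
        by (rule sum.cong) auto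
      also have "\<dots> = c" using i(1) by simp
      finally have Hmu': "H \<mu>' = H \<mu> - c" .
      obtain k' where k': "H \<mu>' = of_nat k'" using H_nat[OF mu'] by blast
      have "k' < k" using k' Hk Hmu' cpos by simp
      hence IH: "\<forall>j\<in>A. j \<notin> KK I \<longrightarrow> rc j \<mu>' = m j" using less.IH mu' k' hI' by blast
      show ?thesis
      proof (intro ballI impI)
        fix j assume j: "j \<in> A" "j \<notin> KK I"
        show "rc j \<mu> = m j"
        proof (cases "j = i")
          case False thus ?thesis using IH j rc'[of j] by simp
        next
          case True
          have iK: "i \<notin> KK I" using j True by simp
          have iS: "i \<in> A - I" using i(1) iI by simp
          have l0: "lam \<bullet> \<alpha> i = 0"
          proof -
            have "\<not> lam \<bullet> \<alpha> i > 0" using lam_component.base[OF iS] iK by blast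
            thus ?thesis using lam_inner_nonneg[OF i(1)] by simp
          qed
          have "(lam - \<mu>') \<bullet> \<alpha> i = (\<Sum>l\<in>A. rc l (lam - \<mu>') * (\<alpha> l \<bullet> \<alpha> i))" by (rule inner_repr)
          also have "\<dots> = 0"
          proof (rule sum.neutral, rule ballI)
            fix l assume l: "l \<in> A"
            show "rc l (lam - \<mu>') * (\<alpha> l \<bullet> \<alpha> i) = 0"
            proof (cases "l \<in> KK I")
              case True
              hence "l \<noteq> i" using iK by blast
              moreover have "\<not> dynkin_adj \<alpha> l i" using lam_component.step[OF True iS] iK by blast
              ultimately show ?thesis unfolding dynkin_adj_def by simp
            next
              case False
              thus ?thesis using IH l by (simp add: rc_diff)
            qed
          qed
          finally have "\<mu>' \<bullet> \<alpha> i = 0" using l0 by (simp add: inner_diff_left)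
          hence "cv i \<mu>' = 0" using cv_eq0_iff[OF i(1)] by simp
          hence "reflection (\<alpha> i) \<mu>' = \<mu>'" by (simp add: refl_eq)
          moreover have "reflection (\<alpha> i) \<mu>' = \<mu>" unfolding \<mu>'_def by (rule reflection_invol[OF nz[OF i(1)]])
          ultimately have "\<mu> = \<mu>'" by simp
          hence False using rc'[of i] cpos by simp
          thus ?thesis ..
        qed
      qed
    qed
  qed
qed

lemma vertex: "\<mu> \<in> Vx \<Longrightarrow> (\<forall>i\<in>I. rc i \<mu> = m i) \<Longrightarrow> j \<in> A \<Longrightarrow> j \<notin> KK I \<Longrightarrow> rc j \<mu> = m j"
proof -
  assume mu: "\<mu> \<in> Vx" and hI: "\<forall>i\<in>I. rc i \<mu> = m i" and j: "j \<in> A" and jK: "j \<notin> KK I"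
  obtain k where Hk: "H \<mu> = of_nat k" using H_nat[OF mu] by blast
  have "\<forall>j\<in>A. j \<notin> KK I \<longrightarrow> rc j \<mu> = m j" using vertex_aux[of k I] mu Hk hI by blast
  thus ?thesis using j jK by blast
qed

lemma face_A:
  assumes x: "x \<in> FF I" and j: "j \<in> A" "j \<notin> KK I"
  shows "rc j x = m j"
proof -
  have "x \<in> convex hull Vx" using x unfolding FF_iff weight_polytope_def by blast
  then obtain S u where S: "finite S" "S \<subseteq> Vx" "\<forall>y\<in>S. 0 \<le> u y" "sum u S = 1"
    "(\<Sum>y\<in>S. u y *\<^sub>R y) = x"
    unfolding convex_hull_explicit mem_Collect_eq by (elim exE conjE) blast
  have rcx: "rc l x = (\<Sum>y\<in>S. u y * rc l y)" for l
  proof -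
    have "rc l x = rc l (\<Sum>y\<in>S. u y *\<^sub>R y)" using S(5) by simp
    also have "\<dots> = (\<Sum>y\<in>S. u y * rc l y)" by (simp add: rc_sum rc_scale)
    finally show ?thesis .
  qed
  have good: "rc i y = m i" if y: "y \<in> S" "u y \<noteq> 0" and i: "i \<in> I" for y i
  proof (cases "i \<in> A")
    case False thus ?thesis by (simp add: rc_out)
  next
    case True
    have rix: "rc i x = m i" using x i unfolding FF_iff by blast
    have s1: "(\<Sum>y\<in>S. u y * rc i y) = m i" by (rule trans[OF sym[OF rcx[of i]] rix])
    have "(\<Sum>y\<in>S. u y * (m i - rc i y)) = m i * sum u S - (\<Sum>y\<in>S. u y * rc i y)"
      by (simp add: algebra_simps sum_subtractf sum_distrib_left sum_distrib_right)
    also have "\<dots> = 0" using S(4) s1 by simp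
    finally have sum0: "(\<Sum>y\<in>S. u y * (m i - rc i y)) = 0" .
    have nn: "u z * (m i - rc i z) \<ge> 0" if "z \<in> S" for z
    proof -
      have "z \<in> Vx" "u z \<ge> 0" using S(2,3) that by auto
      thus "u z * (m i - rc i z) \<ge> 0" using V_le[OF _ True] by (intro mult_nonneg_nonneg) auto
    qed
    have "\<forall>y\<in>S. u y * (m i - rc i y) = 0"
      using sum_nonneg_eq_0_iff[OF S(1), of "\<lambda>z. u z * (m i - rc i z)"] nn sum0 by blast
    hence "u y * (m i - rc i y) = 0" using y(1) by blast
    thus ?thesis using y(2) by simp
  qed
  have "rc j x = (\<Sum>y\<in>S. u y * m j)"
    unfolding rcx
  proof (rule sum.cong)
    fix y assume y: "y \<in> S"
    show "u y * rc j y = u y * m j"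
    proof (cases "u y = 0")
      case False
      have yV: "y \<in> Vx" using S(2) y by blast
      have "\<forall>i\<in>I. rc i y = m i" using good[OF y False] by blast
      hence "rc j y = m j" by (rule vertex[OF yV _ j(1) j(2)])
      thus ?thesis by simp
    qed simp
  qed simp
  also have "\<dots> = m j" using S(4) by (simp add: sum_distrib_right[symmetric])
  finally show ?thesis .
qed

lemma charK: "j \<in> KK I \<longleftrightarrow> j \<in> A \<and> (\<exists>x\<in>FF I. rc j x \<noteq> m j)"
proof
  assume jK: "j \<in> KK I"
  have "j \<in> A" using lc_sub jK by blast
  moreover obtain x where "x \<in> FF I" "rc j x < m j" using compw[OF jK] by blast
  ultimately show "j \<in> A \<and> (\<exists>x\<in>FF I. rc j x \<noteq> m j)" by force
next
  assume H: "j \<in> A \<and> (\<exists>x\<in>FF I. rc j x \<noteq> m j)"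
  then obtain x where x: "x \<in> FF I" "rc j x \<noteq> m j" by blast
  show "j \<in> KK I"
  proof (rule ccontr)
    assume "j \<notin> KK I"
    from face_A[OF x(1) _ this] H x(2) show False by blast
  qed
qed

lemma main_loc:
  assumes "I \<subseteq> A" "J \<subseteq> A"
  shows "(FF I = FF J \<longleftrightarrow> KK I = KK J) \<and> (KK I = KK J \<longleftrightarrow> \<alpha> ` KK I = \<alpha> ` KK J)"
proof (intro conjI)
  have sub: "FF I \<subseteq> FF J" if "KK I = KK J" "J \<subseteq> A" for I J
  proof
    fix x assume x: "x \<in> FF I"
    have "rc i x = m i" if i: "i \<in> J" for i
    proof -
      have "i \<notin> KK J" using lc_sub i by blast
      hence "i \<notin> KK I" using \<open>KK I = KK J\<close> by simp
      thus ?thesis using face_A[OF x] i \<open>J \<subseteq> A\<close> by blast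
    qed
    thus "x \<in> FF J" using x unfolding FF_iff by blast
  qed
  show "FF I = FF J \<longleftrightarrow> KK I = KK J"
  proof
    assume "FF I = FF J"
    show "KK I = KK J"
    proof (rule set_eqI)
      fix j show "j \<in> KK I \<longleftrightarrow> j \<in> KK J"
        unfolding charK[of j I] charK[of j J] using \<open>FF I = FF J\<close> by simp
    qed
  next
    assume "KK I = KK J"
    thus "FF I = FF J" using sub[of I J] sub[of J I] assms by blast
  qed
  have "KK I \<subseteq> A" "KK J \<subseteq> A" using lc_sub by blast+
  thus "KK I = KK J \<longleftrightarrow> \<alpha> ` KK I = \<alpha> ` KK J" using inj_on_image_eq_iff[OF inj] by simp
qed

end

theorem corollary4p4:
  fixes \<alpha> :: "nat \<Rightarrow> 'a::euclidean_space" and n :: nat and lam :: 'a and I J :: "nat set"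
  assumes "simple_system \<alpha> n"
    and "dominant_integral \<alpha> n lam"
    and "I \<subseteq> {1..n}" and "J \<subseteq> {1..n}"
  shows "(weight_face \<alpha> n lam I = weight_face \<alpha> n lam J \<longleftrightarrow> compl0 \<alpha> n lam I = compl0 \<alpha> n lam J)
       \<and> (compl0 \<alpha> n lam I = compl0 \<alpha> n lam J \<longleftrightarrow> \<alpha> ` compl0 \<alpha> n lam I = \<alpha> ` compl0 \<alpha> n lam J)"
proof -
  interpret ssl \<alpha> n lam
    by unfold_locales (fact assms(1), fact assms(2))
  show ?thesis unfolding compl0_def by (rule main_loc[OF assms(3) assms(4)])
qed


end
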